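(* If $f$ satisfies the rate conditions of order $0$ and $z_1,z_2\in D$ satisfy $z_1\in J_u(z_2,1/L)$, then $\|\pi_x(f(z_1)-f(z_2))\|\ge\xi_{u,1,P}\|\pi_x(z_1-z_2)\|$.
   Context: $c,u,s$ positive integers, $\Lambda=(\mathbb{R}/\mathbb{Z})^c$, $R_\Lambda=\tfrac12$; points are "in the same chart" if their $\lambda$-components have lifts to $\mathbb{R}^c$ at distance $\le R_\Lambda$; differences, norms, cones and derivatives are computed in such lifts. $\overline B_n(R)$ closed ball at $0$; Euclidean norms. $0<R<R_\Lambda/2$, $D=\Lambda\times\overline B_u(R)\times\overline B_s(R)$, $z=(\lambda,x,y)$, projections $\pi_\lambda,\pi_x,\pi_y,\pi_{(\lambda,y)}$; $f:D\to\Lambda\times\mathbb{R}^u\times\mathbb{R}^s$ is $C^1$, $f=(f_\lambda,f_x,f_y)$. $m(A)=\max\{c:\|Av\|\ge c\|v\|\}$, $m(\mathbf A)=\inf_{A\in\mathbf A}m(A)$; $[\partial g/\partial w(U)]$ = set of matrices with $(i,j)$ entry in $[\inf_U\partial g_i/\partial w_j,\sup_U\partial g_i/\partial w_j]$; $P(z)=\{w\in D:\|\pi_\lambda w-\pi_\lambda z\|\le R_\Lambda/2\}$. Fix $L\in(2R/R_\Lambda,1)$. $\mu_{s,1}=\sup_D\{\|\partial_yf_y\|+\frac1L\|\partial_{(\lambda,x)}f_y\|\}$, $\xi_{u,1,P}=\inf_{z\in D}m[\partial_xf_x(P(z))]-\frac1L\sup_D\|\partial_{(\lambda,y)}f_x\|$,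 $\mu_{cs,1}=\sup_D\{\|\partial_{(\lambda,y)}f_{(\lambda,y)}\|+L\|\partial_xf_{(\lambda,y)}\|\}$, $\xi_{cu,1,P}=\inf_{z\in D}m[\partial_{(\lambda,x)}f_{(\lambda,x)}(P(z))]-L\sup_D\|\partial_yf_{(\lambda,x)}\|$. Rate conditions of order $0$: $\mu_{s,1}<1<\xi_{u,1,P}$, $\mu_{cs,1}<\xi_{u,1,P}$, $\mu_{s,1}<\xi_{cu,1,P}$. $J_u(z,M)=\{(\lambda,x,y):\|(\lambda,y)-\pi_{(\lambda,y)}z\|\le M\|x-\pi_xz\|\}$. *)

theory Defs
  imports "HOL-Analysis.Analysis"
begin

text \<open>A point of \<Lambda> x R^u x R^s is represented by a lift
  (l, x, y) in R^c x R^u x R^s; f is represented by a lift F of f to the universal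
  cover, i.e. F(l + k, x, y) - F(l, x, y) lies in Z^c x 0 x 0 for integer vectors k.\<close>

type_synonym ('c, 'u, 's) pt = "(real^'c) \<times> (real^'u) \<times> (real^'s)"

definition RLam :: real where "RLam = 1/2"

definition lam :: "('c::finite, 'u::finite, 's::finite) pt \<Rightarrow> real^'c" where
  "lam z = fst z"
definition px :: "('c::finite, 'u::finite, 's::finite) pt \<Rightarrow> real^'u" where
  "px z = fst (snd z)"
definition py :: "('c::finite, 'u::finite, 's::finite) pt \<Rightarrow> real^'s" where
  "py z = snd (snd z)"

definition Zc :: "(real^'c::finite) set" where
  "Zc = {k. \<forall>i. k $ i \<in> \<int>}"

definition Dl :: "real \<Rightarrow> ('c::finite, 'u::finite, 's::finite) pt set" where
  "Dl R = UNIV \<times> cball 0 R \<times> cball 0 R"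

text \<open>P(z) = {w \<in> D. dist_\<Lambda>(\<lambda>w, \<lambda>z) \<le> R_\<Lambda>/2}, torus distance via lifts.\<close>
definition Pset :: "real \<Rightarrow> ('c::finite, 'u::finite, 's::finite) pt \<Rightarrow> ('c, 'u, 's) pt set" where
  "Pset R z = {w \<in> Dl R. \<exists>k\<in>Zc. norm (lam w - lam z + k) \<le> RLam / 2}"

definition m_mat :: "real^'j::finite^'i::finite \<Rightarrow> real" where
  "m_mat A = Sup {c. \<forall>v. c * norm v \<le> norm (A *v v)}"

definition m_set :: "(real^'j::finite^'i::finite) set \<Rightarrow> real" where
  "m_set S = (INF A\<in>S. m_mat A)"

text \<open>Interval matrix [\<partial>g/\<partial>w(U)] from entry functions E w i j = \<partial>g_i/\<partial>w_j (w).\<close>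
definition interval_mat :: "('p \<Rightarrow> 'i::finite \<Rightarrow> 'j::finite \<Rightarrow> real) \<Rightarrow> 'p set \<Rightarrow> (real^'j^'i) set" where
  "interval_mat E U = {A. \<forall>i j. (INF w\<in>U. E w i j) \<le> A $ i $ j \<and> A $ i $ j \<le> (SUP w\<in>U. E w i j)}"

definition E_xx :: "(('c::finite, 'u::finite, 's::finite) pt \<Rightarrow> ('c, 'u, 's) pt \<Rightarrow>\<^sub>L ('c, 'u, 's) pt)
    \<Rightarrow> ('c, 'u, 's) pt \<Rightarrow> 'u \<Rightarrow> 'u \<Rightarrow> real" where
  "E_xx DF w i j = px (blinfun_apply (DF w) (0, axis j 1, 0)) $ i"

definition dir_lx :: "'c + 'u \<Rightarrow> ('c::finite, 'u::finite, 's::finite) pt" where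
  "dir_lx j = (case j of Inl a \<Rightarrow> (axis a 1, 0, 0) | Inr b \<Rightarrow> (0, axis b 1, 0))"
definition coord_lx :: "('c::finite, 'u::finite, 's::finite) pt \<Rightarrow> 'c + 'u \<Rightarrow> real" where
  "coord_lx p i = (case i of Inl a \<Rightarrow> lam p $ a | Inr b \<Rightarrow> px p $ b)"

definition E_lxlx :: "(('c::finite, 'u::finite, 's::finite) pt \<Rightarrow> ('c, 'u, 's) pt \<Rightarrow>\<^sub>L ('c, 'u, 's) pt)
    \<Rightarrow> ('c, 'u, 's) pt \<Rightarrow> 'c + 'u \<Rightarrow> 'c + 'u \<Rightarrow> real" where
  "E_lxlx DF w i j = coord_lx (blinfun_apply (DF w) (dir_lx j :: ('c, 'u, 's) pt)) i"

text \<open>Rate quantities (operator norms are Euclidean; product norms are Euclidean).\<close>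
definition mu_s1 :: "(('c::finite, 'u::finite, 's::finite) pt \<Rightarrow> ('c, 'u, 's) pt \<Rightarrow>\<^sub>L ('c, 'u, 's) pt)
    \<Rightarrow> real \<Rightarrow> real \<Rightarrow> real" where
  "mu_s1 DF L R = (SUP z\<in>(Dl R :: ('c, 'u, 's) pt set).
      onorm (\<lambda>v::real^'s. py (blinfun_apply (DF z) (0, 0, v)))
      + (1 / L) * onorm (\<lambda>(a::real^'c, b::real^'u). py (blinfun_apply (DF z) (a, b, 0))))"

definition xi_u1P :: "(('c::finite, 'u::finite, 's::finite) pt \<Rightarrow> ('c, 'u, 's) pt \<Rightarrow>\<^sub>L ('c, 'u, 's) pt)
    \<Rightarrow> real \<Rightarrow> real \<Rightarrow> real" where
  "xi_u1P DF L R =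
     (INF z\<in>(Dl R :: ('c, 'u, 's) pt set). m_set (interval_mat (E_xx DF) (Pset R z)))
     - (1 / L) * (SUP z\<in>(Dl R :: ('c, 'u, 's) pt set).
          onorm (\<lambda>(a::real^'c, b::real^'s). px (blinfun_apply (DF z) (a, 0, b))))"

definition mu_cs1 :: "(('c::finite, 'u::finite, 's::finite) pt \<Rightarrow> ('c, 'u, 's) pt \<Rightarrow>\<^sub>L ('c, 'u, 's) pt)
    \<Rightarrow> real \<Rightarrow> real \<Rightarrow> real" where
  "mu_cs1 DF L R = (SUP z\<in>(Dl R :: ('c, 'u, 's) pt set).
      onorm (\<lambda>(a::real^'c, b::real^'s).
         (lam (blinfun_apply (DF z) (a, 0, b)), py (blinfun_apply (DF z) (a, 0, b))))
      + L * onorm (\<lambda>v::real^'u.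
         (lam (blinfun_apply (DF z) (0, v, 0)), py (blinfun_apply (DF z) (0, v, 0)))))"

definition xi_cu1P :: "(('c::finite, 'u::finite, 's::finite) pt \<Rightarrow> ('c, 'u, 's) pt \<Rightarrow>\<^sub>L ('c, 'u, 's) pt)
    \<Rightarrow> real \<Rightarrow> real \<Rightarrow> real" where
  "xi_cu1P DF L R =
     (INF z\<in>(Dl R :: ('c, 'u, 's) pt set). m_set (interval_mat (E_lxlx DF) (Pset R z)))
     - L * (SUP z\<in>(Dl R :: ('c, 'u, 's) pt set).
          onorm (\<lambda>v::real^'s.
             (lam (blinfun_apply (DF z) (0, 0, v)), px (blinfun_apply (DF z) (0, 0, v)))))"

definition rate_conditions_0 :: "(('c::finite, 'u::finite, 's::finite) pt \<Rightarrow> ('c, 'u, 's) pt \<Rightarrow>\<^sub>L ('c, 'u, 's) pt)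
    \<Rightarrow> real \<Rightarrow> real \<Rightarrow> bool" where
  "rate_conditions_0 DF L R \<longleftrightarrow>
     mu_s1 DF L R < 1 \<and> 1 < xi_u1P DF L R \<and>
     mu_cs1 DF L R < xi_u1P DF L R \<and> mu_s1 DF L R < xi_cu1P DF L R"

definition lifted_C1 :: "real \<Rightarrow> (('c::finite, 'u::finite, 's::finite) pt \<Rightarrow> ('c, 'u, 's) pt)
    \<Rightarrow> (('c, 'u, 's) pt \<Rightarrow> ('c, 'u, 's) pt \<Rightarrow>\<^sub>L ('c, 'u, 's) pt) \<Rightarrow> bool" where
  "lifted_C1 R F DF \<longleftrightarrow>
     (\<forall>z\<in>Dl R. (F has_derivative blinfun_apply (DF z)) (at z within Dl R)) \<and>
     continuous_on (Dl R) DF \<and>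
     (\<forall>l x y k. (l, x, y) \<in> Dl R \<longrightarrow> k \<in> Zc \<longrightarrow>
        lam (F (l + k, x, y)) - lam (F (l, x, y)) \<in> Zc \<and>
        px (F (l + k, x, y)) = px (F (l, x, y)) \<and>
        py (F (l + k, x, y)) = py (F (l, x, y)))"

text \<open>J_u(z, M), with \<lambda>-differences taken in lifts at distance \<le> R_\<Lambda> (same chart).\<close>
definition in_Ju :: "('c::finite, 'u::finite, 's::finite) pt \<Rightarrow> ('c, 'u, 's) pt \<Rightarrow> real \<Rightarrow> bool" where
  "in_Ju w z M \<longleftrightarrow> norm (lam w - lam z) \<le> RLam \<and>
     norm (lam w - lam z, py w - py z) \<le> M * norm (px w - px z)"

end

theory Submission
  imports Defs
begin


lemma Dl_transl:
  assumes "w \<in> Dl R" shows "w + (k,0,0) \<in> Dl R"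
  using assms by (cases w) (auto simp: Dl_def)

lemma per_int:
  fixes F :: "('c::finite, 'u::finite, 's::finite) pt \<Rightarrow> ('c, 'u, 's) pt"
  assumes C: "lifted_C1 R F DF" and k: "k \<in> Zc"
    and w: "w \<in> UNIV \<times> ball 0 R \<times> ball 0 R"
  shows "px (DF (w + (k,0,0)) v) = px (DF w v)"
proof -
  define U :: "('c,'u,'s) pt set" where "U = UNIV \<times> ball 0 R \<times> ball 0 R"
  have oU: "open U" unfolding U_def by (intro open_Times) auto
  have UD: "U \<subseteq> Dl R" unfolding U_def Dl_def by auto
  have wU: "w \<in> U" using w U_def by simp
  have tU: "p + (k,0,0) \<in> U" if "p \<in> U" for p using that by (cases p) (auto simp: U_def)
  have dF: "(F has_derivative blinfun_apply (DF p)) (at p)" if "p \<in> U" for p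
  proof -
    have "(F has_derivative blinfun_apply (DF p)) (at p within Dl R)"
      using C that UD unfolding lifted_C1_def by blast
    hence "(F has_derivative blinfun_apply (DF p)) (at p within U)"
      using has_derivative_subset UD by blast
    thus ?thesis using at_within_open[OF that oU] by simp
  qed
  have d1: "((\<lambda>p. px (F p)) has_derivative (\<lambda>v. px (DF w v))) (at w)"
    unfolding px_def by (auto intro!: derivative_eq_intros dF[OF wU])
  have d2: "((\<lambda>p. px (F (p + (k,0,0)))) has_derivative (\<lambda>v. px (DF (w + (k,0,0)) v))) (at w)"
  proof -
    have "((\<lambda>p. F (p + (k,0,0))) has_derivative (\<lambda>v. DF (w + (k,0,0)) (id v))) (at w)"
      using has_derivative_compose[of "\<lambda>p. p + (k,0,0)" id w UNIV F "DF (w + (k,0,0))"] dF[OF tU[OF wU]]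
      by (simp add: has_derivative_add_const has_derivative_ident id_def)
    thus ?thesis unfolding px_def by (auto intro!: derivative_eq_intros)
  qed
  have eq: "px (F (p + (k,0,0))) = px (F p)" if "p \<in> U" for p
  proof -
    obtain l x y where p: "p = (l,x,y)" by (cases p)
    have "(l,x,y) \<in> Dl R" using that UD p by auto
    thus ?thesis using C k p unfolding lifted_C1_def by auto
  qed
  have d3: "((\<lambda>p. px (F p)) has_derivative (\<lambda>v. px (DF (w + (k,0,0)) v))) (at w)"
    by (rule has_derivative_transform_within_open[OF d2 oU wU]) (simp add: eq)
  show ?thesis using has_derivative_unique[OF d3 d1] by metis
qed

lemma per:
  fixes F :: "('c::finite, 'u::finite, 's::finite) pt \<Rightarrow> ('c, 'u, 's) pt"
  assumes C: "lifted_C1 R F DF" and R: "0 < R" and k: "k \<in> Zc"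
    and w: "w \<in> Dl R"
  shows "px (DF (w + (k,0,0)) v) = px (DF w v)"
proof -
  define U :: "('c,'u,'s) pt set" where "U = UNIV \<times> ball 0 R \<times> ball 0 R"
  have cl: "closure U = Dl R" unfolding U_def Dl_def closure_Times using R by simp
  have cont: "continuous_on (Dl R) DF" using C unfolding lifted_C1_def by blast
  have c1: "continuous_on (Dl R) (\<lambda>p. DF (p + (k,0,0)))"
    by (rule continuous_on_compose2[OF cont]) (auto intro!: continuous_intros simp: Dl_def)
  have "continuous_on (closure U) (\<lambda>p. px (DF (p + (k,0,0)) v) - px (DF p v))"
    unfolding cl px_def by (intro continuous_intros c1 cont)
  from continuous_constant_on_closure[OF this, of 0 w] per_int[OF C k, of _ v] w cl
  show ?thesis unfolding U_def by auto
qed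

lemma norm_px: "norm (px p) \<le> norm p"
  unfolding px_def using norm_fst_le[of "fst (snd p)" "snd (snd p)"] norm_snd_le[of "snd p" "fst p"] by simp

lemma bnd:
  fixes F :: "('c::finite, 'u::finite, 's::finite) pt \<Rightarrow> ('c, 'u, 's) pt"
  assumes C: "lifted_C1 R F DF" and R: "0 < R"
  shows "\<exists>B. \<forall>z\<in>Dl R. \<forall>v. norm (px (DF z v)) \<le> B * norm v"
proof -
  define K :: "('c,'u,'s) pt set" where "K = cbox 0 1 \<times> cball 0 R \<times> cball 0 R"
  have KD: "K \<subseteq> Dl R" unfolding K_def Dl_def by auto
  have "compact K" unfolding K_def by (intro compact_Times compact_cbox compact_cball)
  moreover have "continuous_on K DF"
    using C KD unfolding lifted_C1_def by (meson continuous_on_subset)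
  ultimately have "compact (DF ` K)" using compact_continuous_image by blast
  then have "bounded (DF ` K)" by (rule compact_imp_bounded)
  then obtain B where B: "\<And>z. z \<in> K \<Longrightarrow> norm (DF z) \<le> B"
    unfolding bounded_iff by auto
  have "norm (px (DF z v)) \<le> B * norm v" if z: "z \<in> Dl R" for z v
  proof -
    obtain l x y where zz: "z = (l,x,y)" by (cases z)
    define k :: "real^'c" where "k = (\<chi> i. - of_int (floor (l $ i)))"
    have k: "k \<in> Zc" unfolding Zc_def k_def by auto
    have "l + k \<in> cbox 0 1" unfolding k_def mem_box_cart
    proof (intro allI conjI)
      fix i
      show "0 $ i \<le> (l + (\<chi> i. - real_of_int \<lfloor>l $ i\<rfloor>)) $ i"
        by simp
      show "(l + (\<chi> i. - real_of_int \<lfloor>l $ i\<rfloor>)) $ i \<le> 1 $ i"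
        using real_of_int_floor_add_one_gt[of "l $ i"] by simp linarith
    qed
    hence zK: "z + (k,0,0) \<in> K" using z zz unfolding K_def Dl_def by auto
    have "norm (px (DF z v)) = norm (px (DF (z + (k,0,0)) v))" using per[OF C R k z] by simp
    also have "\<dots> \<le> norm (DF (z + (k,0,0)) v)" by (rule norm_px)
    also have "\<dots> \<le> norm (DF (z + (k,0,0))) * norm v" by (rule norm_blinfun)
    also have "\<dots> \<le> B * norm v" using B[OF zK] by (simp add: mult_right_mono)
    finally show ?thesis .
  qed
  thus ?thesis by blast
qed



lemma m_mat_props:
  fixes A :: "real^'j::finite^'i::finite"
  shows "0 \<le> m_mat A" and "m_mat A * norm v \<le> norm (A *v v)"
proof -
  define S where "S = {c. \<forall>v. c * norm v \<le> norm (A *v v)}"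
  have ne: "0 \<in> S" unfolding S_def by simp
  have bd: "bdd_above S"
  proof (rule bdd_aboveI)
    fix c assume "c \<in> S"
    hence "c * norm (axis undefined (1::real) :: real^'j) \<le> norm (A *v axis undefined 1)"
      unfolding S_def by blast
    thus "c \<le> norm (A *v axis undefined 1)" by simp
  qed
  show "0 \<le> m_mat A" unfolding m_mat_def S_def[symmetric] using cSup_upper[OF ne bd] .
  show "m_mat A * norm v \<le> norm (A *v v)"
  proof (cases "v = 0")
    case True thus ?thesis by simp
  next
    case False
    hence nv: "norm v > 0" by simp
    have "Sup S \<le> norm (A *v v) / norm v"
    proof (rule cSup_least)
      show "S \<noteq> {}" using ne by blast
      fix c assume "c \<in> S"
      hence "c * norm v \<le> norm (A *v v)" unfolding S_def by blast
      thus "c \<le> norm (A *v v) / norm v" using nv by (simp add: pos_le_divide_eq)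
    qed
    thus ?thesis unfolding m_mat_def S_def[symmetric] using nv by (simp add: pos_le_divide_eq)
  qed
qed

lemma m_set_props:
  fixes A :: "real^'j::finite^'i::finite"
  assumes "A \<in> S"
  shows "0 \<le> m_set S" and "m_set S \<le> m_mat A"
proof -
  have bb: "bdd_below (m_mat ` S)" by (rule bdd_belowI[of _ 0]) (auto simp: m_mat_props)
  show "m_set S \<le> m_mat A" unfolding m_set_def by (rule cINF_lower[OF bb assms])
  show "0 \<le> m_set S" unfolding m_set_def
    by (rule cINF_greatest) (use assms m_mat_props in auto)
qed

lemma inf_sup_bnd:
  fixes g :: "'a \<Rightarrow> real"
  assumes "\<And>w. w \<in> U \<Longrightarrow> \<bar>g w\<bar> \<le> B" and "w \<in> U"
  shows "(INF w\<in>U. g w) \<le> g w" and "g w \<le> (SUP w\<in>U. g w)"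
proof -
  have "bdd_below (g ` U)"
  proof (rule bdd_belowI[of _ "-B"])
    fix x assume "x \<in> g ` U"
    then obtain w where "w \<in> U" "x = g w" by blast
    thus "-B \<le> x" using assms(1)[of w] by linarith
  qed
  thus "(INF w\<in>U. g w) \<le> g w" using cINF_lower[of g U w] assms(2) by simp
  have "bdd_above (g ` U)"
  proof (rule bdd_aboveI[of _ "B"])
    fix x assume "x \<in> g ` U"
    then obtain w where "w \<in> U" "x = g w" by blast
    thus "x \<le> B" using assms(1)[of w] by linarith
  qed
  thus "g w \<le> (SUP w\<in>U. g w)" using cSUP_upper[of w U g] assms(2) by simp
qed

lemma Pset_sub: "Pset R z \<subseteq> Dl R" unfolding Pset_def by auto

lemma self_Pset: "z \<in> Dl R \<Longrightarrow> z \<in> Pset R z"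
proof -
  assume z: "z \<in> Dl R"
  have "(0::real^'a) \<in> Zc" unfolding Zc_def by simp
  moreover have "norm (lam z - lam z + 0) \<le> RLam / 2" unfolding RLam_def by simp
  ultimately show ?thesis unfolding Pset_def using z by blast
qed



theorem lemma4p5:
  fixes F :: "('c::finite, 'u::finite, 's::finite) pt \<Rightarrow> ('c, 'u, 's) pt"
    and DF :: "('c, 'u, 's) pt \<Rightarrow> ('c, 'u, 's) pt \<Rightarrow>\<^sub>L ('c, 'u, 's) pt"
    and R L :: real and z1 z2 :: "('c, 'u, 's) pt"
  assumes "0 < R" and "R < RLam / 2"
    and "2 * R / RLam < L" and "L < 1"
    and "lifted_C1 R F DF"
    and "rate_conditions_0 DF L R"
    and "z1 \<in> Dl R" and "z2 \<in> Dl R"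
    and "in_Ju z1 z2 (1 / L)"
  shows "norm (px (F z1) - px (F z2)) \<ge> xi_u1P DF L R * norm (px z1 - px z2)"
proof -
  note R = assms(1) and C = assms(5) and z1 = assms(7) and z2 = assms(8)
  have L0: "0 < L" using assms(1,3) unfolding RLam_def by (smt (verit) divide_pos_pos)
  obtain B where B: "\<And>z v. z \<in> Dl R \<Longrightarrow> norm (px (DF z v)) \<le> B * norm v"
    using bnd[OF C R] by blast
  have Ebnd: "\<bar>E_xx DF w i j\<bar> \<le> B" if "w \<in> Dl R" for w i j
  proof -
    have "\<bar>E_xx DF w i j\<bar> \<le> norm (px (DF w (0, axis j 1, 0)))"
      unfolding E_xx_def by (rule component_le_norm_cart)
    also have "\<dots> \<le> B * norm ((0, axis j 1, 0) :: ('c,'u,'s) pt)" by (rule B[OF that])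
    also have "norm ((0, axis j 1, 0) :: ('c,'u,'s) pt) = 1" by (simp add: norm_Pair)
    finally show ?thesis by simp
  qed
  define G where "G z = (\<lambda>(a::real^'c, b::real^'s). px (DF z (a, 0, b)))" for z
  have Glin: "bounded_linear (G z)" for z
  proof -
    have "bounded_linear (\<lambda>p::(real^'c)\<times>(real^'s). (fst p, (0::real^'u), snd p))"
      by (intro bounded_linear_Pair bounded_linear_fst bounded_linear_snd bounded_linear_zero)
    hence "bounded_linear (\<lambda>p::(real^'c)\<times>(real^'s). DF z (fst p, 0, snd p))"
      by (rule bounded_linear_compose[OF blinfun.bounded_linear_right])
    hence "bounded_linear (\<lambda>p::(real^'c)\<times>(real^'s). px (DF z (fst p, 0, snd p)))"
      unfolding px_def
      by (intro bounded_linear_compose[OF bounded_linear_fst] bounded_linear_compose[OF bounded_linear_snd])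
    thus ?thesis unfolding G_def by (simp add: case_prod_beta')
  qed
  have Gbnd: "onorm (G z) \<le> B" if "z \<in> Dl R" for z
  proof (rule onorm_le)
    fix p :: "(real^'c)\<times>(real^'s)"
    obtain a b where p: "p = (a,b)" by (cases p)
    have "norm (G z p) \<le> B * norm ((a, 0, b) :: ('c,'u,'s) pt)" unfolding G_def p using B[OF that] by simp
    also have "norm ((a, 0, b) :: ('c,'u,'s) pt) = norm p" unfolding p by (simp add: norm_Pair)
    finally show "norm (G z p) \<le> B * norm p" .
  qed
  define I0 where "I0 = (INF z\<in>(Dl R :: ('c, 'u, 's) pt set). m_set (interval_mat (E_xx DF) (Pset R z)))"
  define S0 where "S0 = (SUP z\<in>(Dl R :: ('c, 'u, 's) pt set). onorm (G z))"
  have xi: "xi_u1P DF L R = I0 - (1/L) * S0"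
    unfolding xi_u1P_def I0_def S0_def G_def ..
  have inP: "(\<chi> i j. E_xx DF z i j) \<in> interval_mat (E_xx DF) (Pset R z)" if "z \<in> Dl R" for z
    unfolding interval_mat_def
  proof (intro CollectI allI)
    fix i j
    have b: "\<And>w. w \<in> Pset R z \<Longrightarrow> \<bar>E_xx DF w i j\<bar> \<le> B"
      using Ebnd Pset_sub[of R z] subsetD by metis
    show "(INF w\<in>Pset R z. E_xx DF w i j) \<le> (\<chi> i j. E_xx DF z i j) $ i $ j \<and>
        (\<chi> i j. E_xx DF z i j) $ i $ j \<le> (SUP w\<in>Pset R z. E_xx DF w i j)"
      using inf_sup_bnd[of "Pset R z" "\<lambda>w. E_xx DF w i j" B, OF b self_Pset[OF that]] by simp
  qed
  have I0le: "I0 \<le> m_set (interval_mat (E_xx DF) (Pset R z))" if "z \<in> Dl R" for z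
  proof -
    have "bdd_below ((\<lambda>z. m_set (interval_mat (E_xx DF) (Pset R z))) ` Dl R)"
      by (rule bdd_belowI[of _ 0]) (auto intro: m_set_props(1)[OF inP])
    thus ?thesis unfolding I0_def by (rule cINF_lower[OF _ that])
  qed
  have S0ge: "onorm (G z) \<le> S0" "0 \<le> S0" if "z \<in> Dl R" for z
  proof -
    have "bdd_above ((\<lambda>z. onorm (G z)) ` Dl R)"
      by (rule bdd_aboveI[of _ B]) (auto intro: Gbnd)
    thus "onorm (G z) \<le> S0" unfolding S0_def by (rule cSUP_upper[OF that])
    thus "0 \<le> S0" using onorm_pos_le[OF Glin] by (rule order_trans[rotated])
  qed
  define d where "d = z1 - z2"
  define zt where "zt t = z2 + t *\<^sub>R d" for t :: real
  define dl where "dl = lam d"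
  define dx where "dx = px d"
  define dy where "dy = py d"
  have dsplit: "d = (dl, dx, dy)" by (simp add: dl_def dx_def dy_def lam_def px_def py_def)
  have dxeq: "dx = px z1 - px z2" by (simp add: dx_def d_def px_def)
  have dleq: "dl = lam z1 - lam z2" by (simp add: dl_def d_def lam_def)
  have dyeq: "dy = py z1 - py z2" by (simp add: dy_def d_def py_def)
  have ndl: "norm dl \<le> RLam" and ndly: "norm (dl, dy) \<le> (1/L) * norm dx"
    using assms(9) unfolding in_Ju_def dleq dyeq dxeq by auto
  have cvx: "convex (Dl R :: ('c,'u,'s) pt set)" unfolding Dl_def
    by (intro convex_Times convex_UNIV convex_cball)
  have ztD: "zt t \<in> Dl R" if "t \<in> {0..1}" for t
  proof -
    have "zt t = (1 - t) *\<^sub>R z2 + t *\<^sub>R z1" unfolding zt_def d_def by (simp add: algebra_simps)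
    thus ?thesis using convexD[OF cvx z2 z1, of "1 - t" t] that by simp
  qed
  define mid where "mid = zt (1/2)"
  have midD: "mid \<in> Dl R" unfolding mid_def by (rule ztD) simp
  have ztP: "zt t \<in> Pset R mid" if t: "t \<in> {0..1}" for t
  proof -
    have "lam (zt t) - lam mid + 0 = (t - 1/2) *\<^sub>R dl"
      unfolding mid_def zt_def dl_def lam_def by (simp add: algebra_simps)
    hence "norm (lam (zt t) - lam mid + 0) = \<bar>t - 1/2\<bar> * norm dl" by simp
    also have "\<dots> \<le> (1/2) * RLam"
    proof (rule mult_mono)
      show "\<bar>t - 1/2\<bar> \<le> 1/2" using t by (auto simp: abs_if)
    qed (use ndl in auto)
    finally have "norm (lam (zt t) - lam mid + 0) \<le> RLam / 2" by simp
    moreover have "(0::real^'c) \<in> Zc" unfolding Zc_def by simp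
    ultimately show ?thesis unfolding Pset_def using ztD[OF t] by blast
  qed
  have hF: "\<And>w. w \<in> Dl R \<Longrightarrow> (F has_derivative blinfun_apply (DF w)) (at w within Dl R)"
    using C unfolding lifted_C1_def by blast
  have contDF: "continuous_on (Dl R) DF" using C unfolding lifted_C1_def by blast
  have dzt: "(zt has_derivative (\<lambda>y. y *\<^sub>R d)) (at t within {0..1})" for t
    unfolding zt_def by (auto intro!: derivative_eq_intros)
  have der: "((\<lambda>s. px (F (zt s))) has_vector_derivative px (DF (zt t) d)) (at t within {0..1})"
    if t: "t \<in> {0..1}" for t
  proof -
    have "((\<lambda>x. F (zt x)) has_derivative (\<lambda>y. DF (zt t) (y *\<^sub>R d))) (at t within {0..1})"
      by (rule has_derivative_in_compose2[of "Dl R" F "\<lambda>w. blinfun_apply (DF w)" zt "{0..1}" t])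
        (use hF ztD t dzt in auto)
    hence "((\<lambda>x. fst (snd (F (zt x)))) has_derivative (\<lambda>y. fst (snd (DF (zt t) (y *\<^sub>R d))))) (at t within {0..1})"
      by (intro has_derivative_fst has_derivative_snd)
    thus ?thesis unfolding has_vector_derivative_def px_def by (simp add: blinfun.scaleR_right)
  qed
  have zt01: "zt 1 = z1" "zt 0 = z2" unfolding zt_def d_def by simp_all
  have ftc: "((\<lambda>t. px (DF (zt t) d)) has_integral (px (F z1) - px (F z2))) {0..1}"
    using fundamental_theorem_of_calculus[of 0 1 "\<lambda>s. px (F (zt s))", OF _ der] zt01 by simp
  have czt: "continuous_on {0..1} zt" unfolding zt_def by (intro continuous_intros)
  have cDF: "continuous_on {0..1} (\<lambda>t. DF (zt t))"
    by (rule continuous_on_compose2[OF contDF czt]) (use ztD in auto)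
  have capp: "continuous_on {0..1} (\<lambda>t. DF (zt t) v)" for v
    using bounded_bilinear.continuous_on[OF bounded_bilinear_blinfun_apply cDF continuous_on_const] .
  define h1 where "h1 t = px (DF (zt t) (0, dx, 0))" for t
  define h2 where "h2 t = px (DF (zt t) (dl, 0, dy))" for t
  have ch1: "continuous_on {0..1} h1" unfolding h1_def px_def by (intro continuous_intros capp)
  have ch2: "continuous_on {0..1} h2" unfolding h2_def px_def by (intro continuous_intros capp)
  have h12: "h1 t + h2 t = px (DF (zt t) d)" for t
  proof -
    have "d = (0, dx, 0) + (dl, 0, dy)" using dsplit by simp
    hence "DF (zt t) d = DF (zt t) (0, dx, 0) + DF (zt t) (dl, 0, dy)"
      by (simp only: blinfun.add_right)
    thus ?thesis unfolding h1_def h2_def px_def by simp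
  qed
  define int1 where "int1 = integral {0..1} h1"
  define int2 where "int2 = integral {0..1} h2"
  have i1: "(h1 has_integral int1) {0..1}" unfolding int1_def
    using integrable_continuous_interval[OF ch1] by (simp add: has_integral_integral)
  have i2: "(h2 has_integral int2) {0..1}" unfolding int2_def
    using integrable_continuous_interval[OF ch2] by (simp add: has_integral_integral)
  have "((\<lambda>t. h1 t + h2 t) has_integral (int1 + int2)) {0..1}" by (rule has_integral_add[OF i1 i2])
  hence sumeq: "px (F z1) - px (F z2) = int1 + int2"
    using ftc unfolding h12 using has_integral_unique by blast
  have nint2: "norm int2 \<le> S0 * norm (dl, dy)"
  proof -
    have nn: "0 \<le> S0 * norm (dl, dy)" using S0ge(2)[OF midD] by simp
    have ii: "(h2 has_integral int2) (cbox 0 1)" using i2 by (simp add: cbox_interval)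
    have bb: "norm (h2 t) \<le> S0 * norm (dl, dy)" if "t \<in> cbox (0::real) 1" for t
    proof -
      from that have t: "t \<in> {0..1}" by (simp add: cbox_interval)
      have "norm (h2 t) = norm (G (zt t) (dl, dy))" unfolding h2_def G_def by simp
      also have "\<dots> \<le> onorm (G (zt t)) * norm (dl, dy)" by (rule onorm[OF Glin])
      also have "\<dots> \<le> S0 * norm (dl, dy)"
        by (rule mult_right_mono[OF S0ge(1)[OF ztD[OF t]]]) simp
      finally show ?thesis .
    qed
    from has_integral_bound[OF nn ii bb]
    show ?thesis by (simp add: cbox_interval)
  qed
  define Ab :: "real^'u^'u" where "Ab = (\<chi> i j. integral {0..1} (\<lambda>t. E_xx DF (zt t) i j))"
  have cE: "continuous_on {0..1} (\<lambda>t. E_xx DF (zt t) i j)" for i j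
    unfolding E_xx_def px_def by (intro continuous_intros capp)
  have h1mat: "h1 t $ i = (\<Sum>j\<in>UNIV. E_xx DF (zt t) i j * dx $ j)" for t i
  proof -
    define g where "g v = px (DF (zt t) (0, v, 0))" for v :: "real^'u"
    have gl: "bounded_linear g"
    proof -
      have "bounded_linear (\<lambda>v::real^'u. ((0::real^'c), v, (0::real^'s)))"
        by (intro bounded_linear_Pair bounded_linear_ident bounded_linear_zero)
      hence "bounded_linear (\<lambda>v::real^'u. DF (zt t) (0, v, 0))"
        by (rule bounded_linear_compose[OF blinfun.bounded_linear_right])
      thus ?thesis unfolding g_def px_def
        by (intro bounded_linear_compose[OF bounded_linear_fst] bounded_linear_compose[OF bounded_linear_snd])
    qed
    have "h1 t = matrix g *v dx" using matrix_vector_mul(3)[OF gl] unfolding h1_def g_def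
      by metis
    thus ?thesis unfolding matrix_def g_def E_xx_def matrix_vector_mult_def by simp
  qed
  have int1eq: "int1 = Ab *v dx"
  proof (rule vec_eq_iff[THEN iffD2], rule allI)
    fix i
    have "int1 $ i = integral {0..1} (\<lambda>t. h1 t $ i)"
      unfolding int1_def using integral_component_eq_cart[OF integrable_continuous_interval[OF ch1]] by simp
    also have "\<dots> = integral {0..1} (\<lambda>t. \<Sum>j\<in>UNIV. E_xx DF (zt t) i j * dx $ j)"
      unfolding h1mat ..
    also have "\<dots> = (\<Sum>j\<in>UNIV. integral {0..1} (\<lambda>t. E_xx DF (zt t) i j * dx $ j))"
      by (rule integral_sum) (auto intro!: integrable_continuous_interval continuous_intros cE)
    also have "\<dots> = (\<Sum>j\<in>UNIV. integral {0..1} (\<lambda>t. E_xx DF (zt t) i j) * dx $ j)"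
      by (simp add: integral_mult_left)
    also have "\<dots> = (Ab *v dx) $ i" unfolding Ab_def matrix_vector_mult_def by simp
    finally show "int1 $ i = (Ab *v dx) $ i" .
  qed
  have AbP: "Ab \<in> interval_mat (E_xx DF) (Pset R mid)"
    unfolding interval_mat_def
  proof (intro CollectI allI conjI)
    fix i j
    have b: "\<And>w. w \<in> Pset R mid \<Longrightarrow> \<bar>E_xx DF w i j\<bar> \<le> B"
      using Ebnd Pset_sub[of R mid] subsetD by metis
    define lo where "lo = (INF w\<in>Pset R mid. E_xx DF w i j)"
    define hi where "hi = (SUP w\<in>Pset R mid. E_xx DF w i j)"
    have lb: "lo \<le> E_xx DF (zt t) i j" and ub: "E_xx DF (zt t) i j \<le> hi" if "t \<in> {0..1}" for t
      unfolding lo_def hi_def using inf_sup_bnd[of "Pset R mid" "\<lambda>w. E_xx DF w i j" B, OF b ztP[OF that]]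
      by simp_all
    have int: "(\<lambda>t. E_xx DF (zt t) i j) integrable_on {0..1}"
      by (rule integrable_continuous_interval[OF cE])
    have "integral {0..1::real} (\<lambda>t. lo) \<le> integral {0..1} (\<lambda>t. E_xx DF (zt t) i j)"
      using Henstock_Kurzweil_Integration.integral_le[of "\<lambda>t. lo" "{0..1}" "\<lambda>t. E_xx DF (zt t) i j", OF integrable_const_ivl int] lb by simp
    thus "(INF w\<in>Pset R mid. E_xx DF w i j) \<le> Ab $ i $ j" unfolding Ab_def lo_def by simp
    have "integral {0..1} (\<lambda>t. E_xx DF (zt t) i j) \<le> integral {0..1::real} (\<lambda>t. hi)"
      using Henstock_Kurzweil_Integration.integral_le[of "\<lambda>t. E_xx DF (zt t) i j" "{0..1}" "\<lambda>t. hi", OF int integrable_const_ivl] ub by simp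
    thus "Ab $ i $ j \<le> (SUP w\<in>Pset R mid. E_xx DF w i j)" unfolding Ab_def hi_def by simp
  qed
  have mA: "I0 \<le> m_mat Ab"
    using I0le[OF midD] m_set_props(2)[OF AbP] by linarith
  have n1: "m_mat Ab * norm dx \<le> norm (Ab *v dx)" by (rule m_mat_props(2))
  have n2: "I0 * norm dx \<le> m_mat Ab * norm dx" by (rule mult_right_mono[OF mA norm_ge_zero])
  have n3: "S0 * norm (dl, dy) \<le> S0 * ((1/L) * norm dx)"
    by (rule mult_left_mono[OF ndly S0ge(2)[OF midD]])
  have n4: "norm (Ab *v dx) - norm int2 \<le> norm (Ab *v dx + int2)" by (rule norm_diff_ineq)
  have "xi_u1P DF L R * norm (px z1 - px z2) = I0 * norm dx - S0 * ((1/L) * norm dx)"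
    unfolding xi dxeq by (simp add: algebra_simps)
  also have "\<dots> \<le> norm (px (F z1) - px (F z2))"
    unfolding sumeq int1eq using n1 n2 n3 n4 nint2 by linarith
  finally show ?thesis .
qed

end
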